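(* Let $p$ be a prime, $n\geq 1$, $\zeta=\zeta_{p^n}$ a primitive $p^n$th root of unity, $T=\mathbb{Z}_{(p)}[\zeta]$ and $t=1-\zeta$. Let $C_{p^n}$ be the cyclic group of order $p^n$ with generator $c$, and consider the localized cyclic Wedderburn embedding \[ \omega_{p^n}\colon T C_{p^n}\longrightarrow\prod_{j\in\mathbb{Z}/p^n}T,\qquad c^i\longmapsto(\zeta^{ij})_{j\in\mathbb{Z}/p^n}\quad(i\in[0,p^n-1]), \] a $T$-linear injective map between free $T$-modules of rank $p^n$. Let $j\in[0,p^n-1]$ and write $j=\sum_{k\ge0}a_kp^k$ with $a_k\in[0,p-1]$. Then the $(j+1)$st $T$-linear elementary divisor of $\omega_{p^n}$ has $t$-adic valuation \[ \sum_{k\geq 0}(a_k-a_{k+1})(k+1)p^k . \]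
   Context: For an injective $T$-linear map $f\colon M\to N$ between free modules of the same finite rank $r$ over a discrete valuation ring $T$ with uniformizer $t$, there are $T$-bases of $M$ and $N$ in which $f$ is diagonal with entries $t^{e_0},\dots,t^{e_{r-1}}$ (times units), $e_0\le\dots\le e_{r-1}$; the $k$th elementary divisor is $t^{e_{k-1}}$, of valuation $e_{k-1}$. $\mathbb{Z}_{(p)}$ is the localization of $\mathbb{Z}$ at $(p)$. *)

theory Defs
  imports Complex_Main "Jordan_Normal_Form.Matrix"
begin

definition Zloc :: "nat \<Rightarrow> complex set" where
  "Zloc p = {of_int a / of_int b | a b. \<not> (int p dvd b)}"

definition zeta :: "nat \<Rightarrow> nat \<Rightarrow> complex" where
  "zeta p n = cis (2 * pi / real (p ^ n))"

definition Tring :: "nat \<Rightarrow> nat \<Rightarrow> complex set" where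
  "Tring p n = {\<Sum>i<m. c i * zeta p n ^ i | m c. \<forall>i. c i \<in> Zloc p}"

definition tunif :: "nat \<Rightarrow> nat \<Rightarrow> complex" where
  "tunif p n = 1 - zeta p n"

definition units_T :: "nat \<Rightarrow> nat \<Rightarrow> complex set" where
  "units_T p n = {u \<in> Tring p n. u \<noteq> 0 \<and> inverse u \<in> Tring p n}"

definition mat_over :: "complex set \<Rightarrow> complex mat \<Rightarrow> bool" where
  "mat_over S A = (\<forall>i < dim_row A. \<forall>j < dim_col A. A $$ (i, j) \<in> S)"

definition GL_T :: "nat \<Rightarrow> nat \<Rightarrow> nat \<Rightarrow> complex mat \<Rightarrow> bool" where
  "GL_T p n N P = (P \<in> carrier_mat N N \<and> mat_over (Tring p n) P \<and>
     (\<exists>P'. P' \<in> carrier_mat N N \<and> mat_over (Tring p n) P' \<and>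
            P * P' = 1\<^sub>m N \<and> P' * P = 1\<^sub>m N))"

text \<open>Matrix of the cyclic Wedderburn embedding omega_{p^n} with respect to the
  T-basis (c^i)_i of T C_{p^n} and the standard basis of prod_j T:
  the coordinate j of the image of c^i is zeta^(i j).\<close>
definition wedderburn_mat :: "nat \<Rightarrow> nat \<Rightarrow> complex mat" where
  "wedderburn_mat p n = mat (p ^ n) (p ^ n) (\<lambda>(j, i). zeta p n ^ (i * j))"

text \<open>e is the (sorted) list of t-adic valuations of the elementary divisors of the
  N x N matrix A over T: there are bases (i.e. P, Q in GL_N(T)) in which A becomes
  diagonal with entries u_k t^(e_k), u_k units, e_0 \<le> ... \<le> e_(N-1).\<close>
definition elem_div_vals :: "nat \<Rightarrow> nat \<Rightarrow> nat \<Rightarrow> complex mat \<Rightarrow> (nat \<Rightarrow> nat) \<Rightarrow> bool" where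
  "elem_div_vals p n N A e =
    ((\<forall>k l. k \<le> l \<and> l < N \<longrightarrow> e k \<le> e l) \<and>
     (\<exists>P Q u. GL_T p n N P \<and> GL_T p n N Q \<and> (\<forall>k<N. u k \<in> units_T p n) \<and>
        P * A * Q = mat N N (\<lambda>(i, k). if i = k then u i * tunif p n ^ e i else 0)))"

definition digit :: "nat \<Rightarrow> nat \<Rightarrow> nat \<Rightarrow> nat" where
  "digit p j k = (j div p ^ k) mod p"

end

theory Submission
  imports Defs "HOL-Number_Theory.Number_Theory" "Jordan_Normal_Form.Determinant" "HOL-Computational_Algebra.Polynomial"
begin


section \<open>Subrings of the complex numbers\<close>

definition subr :: "complex set \<Rightarrow> bool" where
  "subr S = (0 \<in> S \<and> 1 \<in> S \<and> (\<forall>x\<in>S. \<forall>y\<in>S. x + y \<in> S \<and> x * y \<in> S \<and> - x \<in> S))"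

lemma subr_0: "subr S \<Longrightarrow> 0 \<in> S" and subr_1: "subr S \<Longrightarrow> 1 \<in> S"
  and subr_add: "subr S \<Longrightarrow> x \<in> S \<Longrightarrow> y \<in> S \<Longrightarrow> x + y \<in> S"
  and subr_mult: "subr S \<Longrightarrow> x \<in> S \<Longrightarrow> y \<in> S \<Longrightarrow> x * y \<in> S"
  and subr_uminus: "subr S \<Longrightarrow> x \<in> S \<Longrightarrow> - x \<in> S"
  unfolding subr_def by auto

lemma subr_diff: "subr S \<Longrightarrow> x \<in> S \<Longrightarrow> y \<in> S \<Longrightarrow> x - y \<in> S"
  using subr_add[of S x "-y"] subr_uminus[of S y] by simp

lemma subr_sum: "subr S \<Longrightarrow> (\<And>i. i \<in> A \<Longrightarrow> f i \<in> S) \<Longrightarrow> sum f A \<in> S"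
  by (induct A rule: infinite_finite_induct) (auto simp: subr_0 subr_add)

lemma subr_prod: "subr S \<Longrightarrow> (\<And>i. i \<in> A \<Longrightarrow> f i \<in> S) \<Longrightarrow> prod f A \<in> S"
  by (induct A rule: infinite_finite_induct) (auto simp: subr_1 subr_mult)

lemma subr_power: "subr S \<Longrightarrow> x \<in> S \<Longrightarrow> x ^ k \<in> S"
  by (induct k) (auto simp: subr_1 subr_mult)

lemma subr_of_nat: "subr S \<Longrightarrow> of_nat k \<in> S"
  by (induct k) (auto simp: subr_0 subr_1 subr_add)

lemma subr_of_int: "subr S \<Longrightarrow> of_int k \<in> S"
proof (cases "k \<ge> 0")
  case True
  assume S: "subr S"
  have "(of_int k :: complex) = of_nat (nat k)" using True by simp
  then show ?thesis using subr_of_nat[OF S, of "nat k"] by simp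
next
  case False
  assume S: "subr S"
  have "(of_int k :: complex) = - of_nat (nat (-k))" using False by simp
  then show ?thesis using subr_uminus[OF S subr_of_nat[OF S, of "nat (-k)"]] by simp
qed

lemma subr_signof: "subr S \<Longrightarrow> (of_int (sign q) :: complex) \<in> S"
  by (rule subr_of_int)

definition polys_over :: "complex set \<Rightarrow> complex poly set" where
  "polys_over S = {q. \<forall>i. poly.coeff q i \<in> S}"

lemma polys_over_add: "subr S \<Longrightarrow> a \<in> polys_over S \<Longrightarrow> b \<in> polys_over S \<Longrightarrow> a + b \<in> polys_over S"
  unfolding polys_over_def by (auto simp: subr_add)

lemma polys_over_uminus: "subr S \<Longrightarrow> a \<in> polys_over S \<Longrightarrow> - a \<in> polys_over S"
  unfolding polys_over_def by (auto simp: subr_uminus)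

lemma polys_over_mult: "subr S \<Longrightarrow> a \<in> polys_over S \<Longrightarrow> b \<in> polys_over S \<Longrightarrow> a * b \<in> polys_over S"
  unfolding polys_over_def by (auto simp: coeff_mult intro!: subr_sum subr_mult)

lemma polys_over_const: "subr S \<Longrightarrow> c \<in> S \<Longrightarrow> [:c:] \<in> polys_over S"
  unfolding polys_over_def by (auto simp: subr_0 coeff_pCons split: nat.splits)

lemma polys_over_0: "subr S \<Longrightarrow> 0 \<in> polys_over S"
  unfolding polys_over_def by (auto simp: subr_0)

lemma polys_over_1: "subr S \<Longrightarrow> 1 \<in> polys_over S"
  unfolding polys_over_def by (auto simp: subr_0 subr_1 coeff_1)

lemma polys_over_monom: "subr S \<Longrightarrow> c \<in> S \<Longrightarrow> monom c k \<in> polys_over S"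
  unfolding polys_over_def by (auto simp: subr_0 coeff_monom)

lemma polys_over_linear: "subr S \<Longrightarrow> c \<in> S \<Longrightarrow> [:c, 1:] \<in> polys_over S"
  unfolding polys_over_def by (auto simp: subr_0 subr_1 coeff_pCons split: nat.splits)

lemma polys_over_prod: "subr S \<Longrightarrow> (\<And>i. i \<in> A \<Longrightarrow> f i \<in> polys_over S) \<Longrightarrow> prod f A \<in> polys_over S"
  by (induct A rule: infinite_finite_induct)
     (auto intro: polys_over_mult polys_over_const simp: subr_1 simp flip: pCons_one)

definition eval_set :: "complex set \<Rightarrow> complex \<Rightarrow> complex set" where
  "eval_set S z = {poly q z | q. q \<in> polys_over S}"

lemma subr_eval_set: assumes "subr S" shows "subr (eval_set S z)"
proof -
  have "0 \<in> eval_set S z" unfolding eval_set_def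
    by (rule CollectI, rule exI[of _ 0]) (auto simp: polys_over_0 assms)
  moreover have "1 \<in> eval_set S z" unfolding eval_set_def
    by (rule CollectI, rule exI[of _ 1]) (auto simp: polys_over_1 assms)
  moreover have "x + y \<in> eval_set S z \<and> x * y \<in> eval_set S z \<and> - x \<in> eval_set S z"
    if "x \<in> eval_set S z" "y \<in> eval_set S z" for x y
  proof -
    from that obtain a b where ab: "a \<in> polys_over S" "b \<in> polys_over S" "x = poly a z" "y = poly b z"
      unfolding eval_set_def by auto
    have "x + y = poly (a + b) z" "x * y = poly (a * b) z" "- x = poly (- a) z" using ab by auto
    then show ?thesis unfolding eval_set_def
      using polys_over_add[OF assms ab(1,2)] polys_over_mult[OF assms ab(1,2)] polys_over_uminus[OF assms ab(1)]
      by blast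
  qed
  ultimately show ?thesis unfolding subr_def by blast
qed

lemma eval_set_sub: "subr S \<Longrightarrow> c \<in> S \<Longrightarrow> c \<in> eval_set S z"
  unfolding eval_set_def by (rule CollectI, rule exI[of _ "[:c:]"]) (auto intro: polys_over_const)

lemma eval_set_z: "subr S \<Longrightarrow> z \<in> eval_set S z"
  unfolding eval_set_def by (rule CollectI, rule exI[of _ "monom 1 1"]) (auto intro: polys_over_monom simp: subr_1 poly_monom)

lemma Zloc_subr: assumes "prime p" shows "subr (Zloc p)"
proof -
  have pi: "prime (int p)" using assms by simp
  have nd1: "\<not> int p dvd 1" using pi by (meson not_prime_unit zdvd1_eq)
  have "0 \<in> Zloc p" unfolding Zloc_def by (rule CollectI, rule exI[of _ 0], rule exI[of _ 1]) (use nd1 in auto)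
  moreover have "1 \<in> Zloc p" unfolding Zloc_def by (rule CollectI, rule exI[of _ 1], rule exI[of _ 1]) (use nd1 in auto)
  moreover have "x + y \<in> Zloc p \<and> x * y \<in> Zloc p \<and> - x \<in> Zloc p" if "x \<in> Zloc p" "y \<in> Zloc p" for x y
  proof -
    from that obtain a b c d where abcd: "x = of_int a / of_int b" "\<not> int p dvd b"
      "y = of_int c / of_int d" "\<not> int p dvd d" unfolding Zloc_def by auto
    have b0: "b \<noteq> 0" "d \<noteq> 0" using abcd by auto
    have bd: "\<not> int p dvd (b * d)" using abcd pi by (simp add: prime_dvd_mult_iff)
    have "x + y = of_int (a * d + c * b) / of_int (b * d)" using b0 abcd by (simp add: field_simps)
    moreover have "x * y = of_int (a * c) / of_int (b * d)" using b0 abcd by (simp add: field_simps)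
    moreover have "- x = of_int (- a) / of_int b" using abcd by simp
    ultimately show ?thesis unfolding Zloc_def using bd abcd by blast
  qed
  ultimately show ?thesis unfolding subr_def by blast
qed

lemma Tring_eval_set: assumes pr: "prime p" shows "Tring p n = eval_set (Zloc p) (zeta p n)"
proof
  show "Tring p n \<subseteq> eval_set (Zloc p) (zeta p n)"
  proof
    fix x assume "x \<in> Tring p n"
    then obtain m c where x: "x = (\<Sum>i<m. c i * zeta p n ^ i)" and c: "\<forall>i. c i \<in> Zloc p"
      unfolding Tring_def by auto
    define q where "q = (\<Sum>i<m. monom (c i) i)"
    have "poly q (zeta p n) = x" unfolding q_def x by (simp add: poly_sum poly_monom)
    moreover have "q \<in> polys_over (Zloc p)" unfolding polys_over_def q_def
      using subr_0[OF Zloc_subr[OF pr]] by (auto simp: coeff_sum coeff_monom c)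
    ultimately show "x \<in> eval_set (Zloc p) (zeta p n)" unfolding eval_set_def by auto
  qed
  show "eval_set (Zloc p) (zeta p n) \<subseteq> Tring p n"
  proof
    fix x assume "x \<in> eval_set (Zloc p) (zeta p n)"
    then obtain q where q: "q \<in> polys_over (Zloc p)" "x = poly q (zeta p n)" unfolding eval_set_def by auto
    have "x = (\<Sum>i<Suc (degree q). poly.coeff q i * zeta p n ^ i)"
      unfolding q(2) poly_altdef lessThan_Suc_atMost ..
    then show "x \<in> Tring p n" unfolding Tring_def using q(1) unfolding polys_over_def by blast
  qed
qed

lemma T_subr: "prime p \<Longrightarrow> subr (Tring p n)"
  unfolding Tring_eval_set by (rule subr_eval_set, rule Zloc_subr)

lemma zeta_T: "prime p \<Longrightarrow> zeta p n \<in> Tring p n"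
  unfolding Tring_eval_set by (rule eval_set_z, rule Zloc_subr)

lemma Zloc_T: "prime p \<Longrightarrow> c \<in> Zloc p \<Longrightarrow> c \<in> Tring p n"
  unfolding Tring_eval_set by (rule eval_set_sub, rule Zloc_subr)



lemma zeta_pow: "zeta p n ^ k = cis (2 * pi * real k / real (p ^ n))"
  unfolding zeta_def DeMoivre by (simp add: ac_simps)

lemma zeta_pow_N: "p > 0 \<Longrightarrow> zeta p n ^ (p ^ n) = 1"
  unfolding zeta_pow by simp

lemma zeta_ne_0: "zeta p n \<noteq> 0"
  unfolding zeta_def by simp

lemma pow_mod_eq: assumes "(z::complex) ^ M = 1" shows "z ^ k = z ^ (k mod M)"
proof -
  have "z ^ k = z ^ (M * (k div M) + k mod M)" by simp
  also have "\<dots> = (z ^ M) ^ (k div M) * z ^ (k mod M)" by (simp only: power_add power_mult)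
  finally show ?thesis using assms by simp
qed

lemma zeta_pow_mod: "p > 0 \<Longrightarrow> zeta p n ^ k = zeta p n ^ (k mod p ^ n)"
  by (rule pow_mod_eq, rule zeta_pow_N)

lemma zeta_inj: assumes "p > 0" "a < p ^ n" "b < p ^ n" "zeta p n ^ a = zeta p n ^ b" shows "a = b"
proof -
  have "p ^ n > 0" using assms by simp
  from bij_betw_imp_inj_on[OF bij_betw_roots_unity[OF this]]
  have "inj_on (\<lambda>k. cis (2 * pi * real k / real (p ^ n))) {..<p ^ n}" .
  then show ?thesis using assms unfolding zeta_pow by (auto dest: inj_onD)
qed

lemma zeta_pow_eq_iff: assumes "p > 0" shows "zeta p n ^ a = zeta p n ^ b \<longleftrightarrow> a mod p ^ n = b mod p ^ n"
proof
  assume "zeta p n ^ a = zeta p n ^ b"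
  then have "zeta p n ^ (a mod p ^ n) = zeta p n ^ (b mod p ^ n)"
    using zeta_pow_mod[OF assms] by metis
  note * = this
  show "a mod p ^ n = b mod p ^ n"
    by (rule zeta_inj[OF assms _ _ *]) (use assms in simp_all)
next
  assume "a mod p ^ n = b mod p ^ n"
  then show "zeta p n ^ a = zeta p n ^ b" using zeta_pow_mod[OF assms] by metis
qed

lemma zeta_pow_eq_1: assumes "p > 0" shows "zeta p n ^ k = 1 \<longleftrightarrow> p ^ n dvd k"
  using zeta_pow_eq_iff[OF assms, where a=k and b=0 and n=n] by (simp add: dvd_eq_mod_eq_0)

lemma unitsI: "u \<in> Tring p n \<Longrightarrow> w \<in> Tring p n \<Longrightarrow> u * w = 1 \<Longrightarrow> u \<in> units_T p n"
  unfolding units_T_def using inverse_unique by fastforce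

lemma units_T: "u \<in> units_T p n \<Longrightarrow> u \<in> Tring p n"
  and units_ne0: "u \<in> units_T p n \<Longrightarrow> u \<noteq> 0"
  and units_invT: "u \<in> units_T p n \<Longrightarrow> inverse u \<in> Tring p n"
  unfolding units_T_def by auto

lemma units_inverse: "u \<in> units_T p n \<Longrightarrow> inverse u \<in> units_T p n"
  unfolding units_T_def by auto

lemma units_1: "prime p \<Longrightarrow> 1 \<in> units_T p n"
  by (rule unitsI[of _ _ _ 1]) (auto simp: subr_1 T_subr)

lemma units_mult: assumes "prime p" "u \<in> units_T p n" "w \<in> units_T p n" shows "u * w \<in> units_T p n"
proof (rule unitsI[of _ _ _ "inverse u * inverse w"])
  show "u * w \<in> Tring p n" "inverse u * inverse w \<in> Tring p n"
    using assms by (auto intro!: subr_mult T_subr simp: units_T units_invT)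
  show "u * w * (inverse u * inverse w) = 1" using assms units_ne0 by (simp add: field_simps)
qed

lemma units_prod: "prime p \<Longrightarrow> (\<And>i. i \<in> A \<Longrightarrow> f i \<in> units_T p n) \<Longrightarrow> prod f A \<in> units_T p n"
  by (induct A rule: infinite_finite_induct) (auto simp: units_1 units_mult)

lemma units_power: "prime p \<Longrightarrow> u \<in> units_T p n \<Longrightarrow> u ^ k \<in> units_T p n"
  by (induct k) (auto simp: units_1 units_mult)

lemma units_uminus: assumes "prime p" "u \<in> units_T p n" shows "- u \<in> units_T p n"
proof (rule unitsI[of _ _ _ "- inverse u"])
  show "- u \<in> Tring p n" "- inverse u \<in> Tring p n"
    using assms by (auto intro!: subr_uminus T_subr simp: units_T units_invT)
  show "- u * - inverse u = 1" using assms units_ne0 by (simp add: field_simps)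
qed

lemma units_zeta: assumes "prime p" shows "zeta p n \<in> units_T p n"
proof (rule unitsI[of _ _ _ "zeta p n ^ (p ^ n - 1)"])
  show "zeta p n \<in> Tring p n" "zeta p n ^ (p ^ n - 1) \<in> Tring p n"
    using assms by (auto intro!: subr_power T_subr zeta_T)
  have p0: "p > 0" using assms prime_gt_0_nat by blast
  have "zeta p n * zeta p n ^ (p ^ n - 1) = zeta p n ^ (Suc (p ^ n - 1))" by simp
  also have "Suc (p ^ n - 1) = p ^ n" using p0 by simp
  finally show "zeta p n * zeta p n ^ (p ^ n - 1) = 1" using zeta_pow_N[OF p0] by simp
qed

lemma units_neg1: "prime p \<Longrightarrow> - 1 \<in> units_T p n"
  using units_uminus units_1 by blast

section \<open>Cyclotomic units\<close>

lemma geo_unit: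
  assumes pr: "prime p" and eT: "e \<in> Tring p n" and eM: "e ^ M = 1" and e1: "e \<noteq> 1"
    and cop: "coprime k M"
  shows "(\<Sum>s<k. e ^ s) \<in> units_T p n"
proof -
  obtain k' where kk: "[k * k' = 1] (mod M)" using cong_solve_coprime_nat[OF cop] by auto
  have M1: "M \<noteq> 1" using eM e1 by auto
  have "e ^ (k * k') = e ^ ((k * k') mod M)" by (rule pow_mod_eq[OF eM])
  also have "(k * k') mod M = 1 mod M" using kk unfolding cong_def .
  also have "1 mod M = 1" using M1 by (cases M) auto
  finally have ekk: "e ^ (k * k') = e" by simp
  define S where "S = (\<Sum>s<k. e ^ s)"
  define S' where "S' = (\<Sum>s<k'. (e ^ k) ^ s)"
  have 1: "1 - e ^ k = (1 - e) * S" unfolding S_def by (rule one_diff_power_eq)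
  have 2: "1 - (e ^ k) ^ k' = (1 - e ^ k) * S'" unfolding S'_def by (rule one_diff_power_eq)
  have "(1 - e) * (S * S') = 1 - e" using 1 2 ekk by (simp add: power_mult[symmetric] mult.assoc)
  then have SS: "S * S' = 1" using e1 by simp
  have ST: "S \<in> Tring p n" "S' \<in> Tring p n" unfolding S_def S'_def
    using pr eT by (auto intro!: subr_sum subr_power T_subr)
  show ?thesis using unitsI[OF ST SS] unfolding S_def .
qed

lemma prod_roots_poly:
  fixes w :: complex
  assumes wM: "w ^ M = 1" and inj: "inj_on (\<lambda>s. w ^ s) {..<M}" and M0: "M > 0"
  shows "(\<Prod>s<M. [:- (w ^ s), 1:]) = monom 1 M - 1"
proof (rule ccontr)
  define P where "P = (\<Prod>s<M. [:- (w ^ s), 1:])"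
  define R where "R = (monom 1 M - 1) - P"
  assume "\<not> ?thesis"
  then have R0: "R \<noteq> 0" unfolding R_def P_def by simp
  have dP: "degree P = M" unfolding P_def
    by (subst degree_prod_eq_sum_degree) auto
  have lP: "lead_coeff P = 1" unfolding P_def by (simp add: lead_coeff_prod)
  have "poly.coeff R i = 0" if "i \<ge> M" for i
  proof (cases "i = M")
    case True
    then show ?thesis using lP dP M0 unfolding R_def by (simp add: coeff_monom)
  next
    case False
    then have "i > degree P" using that dP by simp
    then have "poly.coeff P i = 0" by (rule coeff_eq_0)
    then show ?thesis using False that M0 unfolding R_def by (simp add: coeff_monom)
  qed
  then have "degree R \<le> M - 1" by (intro degree_le) auto
  moreover have "card {x. poly R x = 0} \<le> degree R" by (rule card_poly_roots_bound[OF R0])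
  moreover have "(\<lambda>s. w ^ s) ` {..<M} \<subseteq> {x. poly R x = 0}"
  proof
    fix x assume "x \<in> (\<lambda>s. w ^ s) ` {..<M}"
    then obtain s where s: "s < M" "x = w ^ s" by auto
    have "x ^ M = 1" using s wM by (simp add: power_mult[symmetric] mult.commute power_mult)
    moreover have "poly P x = 0" unfolding P_def poly_prod using s by (auto intro!: prod_zero)
    ultimately show "x \<in> {x. poly R x = 0}" unfolding R_def by (simp add: poly_monom)
  qed
  then have "card ((\<lambda>s. w ^ s) ` {..<M}) \<le> card {x. poly R x = 0}"
    by (intro card_mono poly_roots_finite R0)
  moreover have "card ((\<lambda>s. w ^ s) ` {..<M}) = M" using card_image[OF inj] by simp
  ultimately show False using M0 by linarith
qed

lemma prod_roots:
  fixes w :: complex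
  assumes "w ^ M = 1" "inj_on (\<lambda>s. w ^ s) {..<M}" "M > 0"
  shows "(\<Prod>s<M. (x - w ^ s)) = x ^ M - 1"
  using arg_cong[OF prod_roots_poly[OF assms], of "\<lambda>q. poly q x"]
  by (simp add: poly_prod poly_monom)

lemma mult_pow_times: assumes "prime (p::nat)" "y \<noteq> 0" "\<not> p dvd y"
  shows "multiplicity p (p ^ k * y) = k"
proof (induct k)
  case 0
  then show ?case using assms by (simp add: not_dvd_imp_multiplicity_0)
next
  case (Suc k)
  have "multiplicity p (p * (p ^ k * y)) = Suc (multiplicity p (p ^ k * y))"
    by (rule multiplicity_times_same) (use assms in \<open>auto simp: prime_gt_0_nat\<close>)
  then show ?case using Suc by (simp add: mult.assoc)
qed

lemma zeta_minus_pow: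
  assumes pr: "prime p" and n1: "n \<ge> 1" and a: "a < p ^ n" "p dvd a"
  shows "\<exists>u \<in> units_T p n. zeta p n - zeta p n ^ a = u * tunif p n"
proof (cases "a = 0")
  case True
  then show ?thesis using units_neg1[OF pr, of n] unfolding tunif_def by (intro bexI[of _ "-1"]) auto
next
  case False
  have p0: "p > 0" using pr prime_gt_0_nat by blast
  have p1: "p > 1" using pr prime_gt_1_nat by blast
  have nd: "\<not> p dvd (a - 1)"
  proof
    assume "p dvd (a - 1)"
    with a(2) have "p dvd (a - (a - 1))" by (rule dvd_diff_nat)
    then show False using False p1 by simp
  qed
  have cop: "coprime (a - 1) (p ^ n)"
    using nd pr by (simp add: coprime_commute prime_imp_coprime)
  have z1: "zeta p n \<noteq> 1"
  proof
    assume "zeta p n = 1"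
    then have "zeta p n ^ 1 = 1" by simp
    then have "p ^ n dvd 1" using zeta_pow_eq_1[OF p0] by blast
    then show False using p1 n1 by (simp add: nat_dvd_1_iff_1)
  qed
  have S: "(\<Sum>s<a-1. zeta p n ^ s) \<in> units_T p n"
    by (rule geo_unit[OF pr zeta_T[OF pr] zeta_pow_N[OF p0] z1 cop])
  have "zeta p n - zeta p n ^ a = zeta p n * (1 - zeta p n ^ (a - 1))"
    using False by (cases a) (auto simp: algebra_simps)
  also have "\<dots> = (zeta p n * (\<Sum>s<a-1. zeta p n ^ s)) * tunif p n"
    unfolding tunif_def one_diff_power_eq by (simp add: ac_simps)
  finally show ?thesis using units_mult[OF pr units_zeta[OF pr] S] by blast
qed

lemma one_minus_zeta_pp:
  assumes pr: "prime p" and v: "v < n"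
  shows "\<exists>u \<in> units_T p n. 1 - zeta p n ^ (p ^ v) = u * tunif p n ^ (p ^ v)"
proof -
  have p0: "p > 0" using pr prime_gt_0_nat by blast
  have n1: "n \<ge> 1" using v by simp
  define w where "w = zeta p n ^ (p ^ (n - v))"
  define M where "M = p ^ v"
  have NM: "p ^ n = p ^ (n - v) * M" unfolding M_def using v by (simp add: power_add[symmetric])
  have wM: "w ^ M = 1" unfolding w_def power_mult[symmetric] NM[symmetric] by (rule zeta_pow_N[OF p0])
  have inj: "inj_on (\<lambda>s. w ^ s) {..<M}"
  proof (rule inj_onI)
    fix s s' assume "s \<in> {..<M}" "s' \<in> {..<M}" "w ^ s = w ^ s'"
    then have ss: "s < M" "s' < M" "zeta p n ^ (p ^ (n - v) * s) = zeta p n ^ (p ^ (n - v) * s')"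
      unfolding w_def power_mult by auto
    have "p ^ (n - v) * s < p ^ n" "p ^ (n - v) * s' < p ^ n" using ss(1,2) p0 unfolding NM by auto
    from zeta_inj[OF p0 this ss(3)] show "s = s'" using p0 by simp
  qed
  have M0: "M > 0" unfolding M_def using p0 by simp
  have prod: "(\<Prod>s<M. (zeta p n - w ^ s)) = zeta p n ^ M - 1" by (rule prod_roots[OF wM inj M0])
  have "\<forall>s\<in>{..<M}. \<exists>u. u \<in> units_T p n \<and> zeta p n - w ^ s = u * tunif p n"
  proof
    fix s assume s: "s \<in> {..<M}"
    have "p ^ (n - v) * s < p ^ n" using s p0 unfolding NM by auto
    moreover have "p dvd p ^ (n - v) * s" using v by (simp add: dvd_mult2)
    ultimately show "\<exists>u. u \<in> units_T p n \<and> zeta p n - w ^ s = u * tunif p n"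
      using zeta_minus_pow[OF pr n1] unfolding w_def power_mult[symmetric] by blast
  qed
  from bchoice[OF this] obtain uf where uf: "\<forall>s\<in>{..<M}. uf s \<in> units_T p n \<and> zeta p n - w ^ s = uf s * tunif p n"
    by blast
  have "(\<Prod>s<M. (zeta p n - w ^ s)) = (\<Prod>s<M. uf s * tunif p n)" using uf by (intro prod.cong) auto
  also have "\<dots> = (\<Prod>s<M. uf s) * tunif p n ^ M" by (simp add: prod.distrib)
  finally have "1 - zeta p n ^ M = (- (\<Prod>s<M. uf s)) * tunif p n ^ M" using prod by (simp add: algebra_simps)
  moreover have "- (\<Prod>s<M. uf s) \<in> units_T p n" using uf by (intro units_uminus[OF pr] units_prod[OF pr]) auto
  ultimately show ?thesis unfolding M_def by blast
qed

lemma one_minus_zeta_pow: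
  assumes pr: "prime p" and i: "0 < i" "i < p ^ n"
  shows "\<exists>u \<in> units_T p n. 1 - zeta p n ^ i = u * tunif p n ^ (p ^ multiplicity p i)"
proof -
  have p0: "p > 0" and p1: "p > 1" using pr prime_gt_0_nat prime_gt_1_nat by blast+
  define v where "v = multiplicity p i"
  obtain k where k: "i = p ^ v * k" "\<not> p dvd k" unfolding v_def
    using multiplicity_decompose'[of i p] i pr by (metis less_not_refl2 not_prime_unit)
  have k0: "k > 0" using k i by (cases k) auto
  have "p ^ v \<le> i" using k k0 by simp
  then have "p ^ v < p ^ n" using i by simp
  then have vn: "v < n" using p1 by (simp add: power_strict_increasing_iff)
  define e where "e = zeta p n ^ (p ^ v)"
  have NM: "p ^ n = p ^ v * p ^ (n - v)" using vn by (simp add: power_add[symmetric])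
  have eM: "e ^ (p ^ (n - v)) = 1" unfolding e_def power_mult[symmetric] NM[symmetric] by (rule zeta_pow_N[OF p0])
  have e1: "e \<noteq> 1"
  proof
    assume "e = 1"
    then have "p ^ n dvd p ^ v" using zeta_pow_eq_1[OF p0] unfolding e_def by blast
    then have "p ^ n \<le> p ^ v" using p0 by (simp add: dvd_imp_le)
    moreover have "p ^ v < p ^ n" using vn p1 by simp
    ultimately show False by linarith
  qed
  have cpk: "coprime k p" using prime_imp_coprime[OF pr k(2)] by (simp add: coprime_commute)
  have cop: "coprime k (p ^ (n - v))" using cpk by simp
  have S: "(\<Sum>s<k. e ^ s) \<in> units_T p n"
    by (rule geo_unit[OF pr _ eM e1 cop]) (use pr in \<open>auto simp: e_def intro!: subr_power T_subr zeta_T\<close>)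
  obtain u where u: "u \<in> units_T p n" "1 - e = u * tunif p n ^ (p ^ v)"
    using one_minus_zeta_pp[OF pr vn] unfolding e_def by blast
  have "1 - zeta p n ^ i = 1 - e ^ k" unfolding e_def k power_mult ..
  also have "\<dots> = (1 - e) * (\<Sum>s<k. e ^ s)" by (rule one_diff_power_eq)
  also have "\<dots> = (u * (\<Sum>s<k. e ^ s)) * tunif p n ^ (p ^ v)" unfolding u by (simp add: ac_simps)
  finally show ?thesis using units_mult[OF pr u(1) S] unfolding v_def by blast
qed



lemma p_unit_pow:
  assumes pr: "prime p" and n1: "n \<ge> 1"
  shows "\<exists>u \<in> units_T p n. (of_nat p :: complex) = u * tunif p n ^ ((p - 1) * p ^ (n - 1))"
proof -
  have p0: "p > 0" and p1: "p > 1" using pr prime_gt_0_nat prime_gt_1_nat by blast+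
  define w where "w = zeta p n ^ (p ^ (n - 1))"
  have NM: "p ^ n = p ^ (n - 1) * p" using n1 by (cases n) (auto simp: mult.commute)
  have wM: "w ^ p = 1" unfolding w_def power_mult[symmetric] NM[symmetric] by (rule zeta_pow_N[OF p0])
  have inj: "inj_on (\<lambda>s. w ^ s) {..<p}"
  proof (rule inj_onI)
    fix s s' assume "s \<in> {..<p}" "s' \<in> {..<p}" "w ^ s = w ^ s'"
    then have ss: "s < p" "s' < p" "zeta p n ^ (p ^ (n - 1) * s) = zeta p n ^ (p ^ (n - 1) * s')"
      unfolding w_def power_mult by auto
    have "p ^ (n - 1) * s < p ^ n" "p ^ (n - 1) * s' < p ^ n" using ss(1,2) p0 unfolding NM by auto
    from zeta_inj[OF p0 this ss(3)] show "s = s'" using p0 by simp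
  qed
  have pq: "(\<Prod>s<p. [:- (w ^ s), 1:]) = monom 1 p - 1" by (rule prod_roots_poly[OF wM inj p0])
  have ps: "{..<p} = {..<Suc (p - 1)}" using p0 by simp
  have "(\<Prod>s<p. [:- (w ^ s), 1:]) = [:-1, 1:] * (\<Prod>s<p - 1. [:- (w ^ Suc s), 1:])"
    unfolding ps prod.lessThan_Suc_shift by simp
  moreover have "monom 1 p - 1 = [:-1, 1:] * (\<Sum>s<p. monom (1::complex) s)"
  proof -
    have "poly (monom 1 p - 1) = poly ([:-1, 1:] * (\<Sum>s<p. monom (1::complex) s))"
    proof
      fix x :: complex
      show "poly (monom 1 p - 1) x = poly ([:-1, 1:] * (\<Sum>s<p. monom (1::complex) s)) x"
        by (simp add: poly_monom poly_sum power_diff_1_eq algebra_simps)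
    qed
    then show ?thesis by (simp add: poly_eq_poly_eq_iff)
  qed
  ultimately have "[:-1, 1:] * (\<Prod>s<p - 1. [:- (w ^ Suc s), 1:]) = [:-1, 1:] * (\<Sum>s<p. monom (1::complex) s)"
    using pq by simp
  moreover have c0: "[:-1, 1::complex:] \<noteq> 0" by simp
  ultimately have "(\<Prod>s<p - 1. [:- (w ^ Suc s), 1:]) = (\<Sum>s<p. monom (1::complex) s)"
    using mult_left_cancel[OF c0] by blast
  from arg_cong[OF this, of "\<lambda>q. poly q 1"]
  have pe: "(\<Prod>s<p - 1. (1 - w ^ Suc s)) = of_nat p" by (simp add: poly_prod poly_sum poly_monom)
  have "\<forall>s\<in>{..<p-1}. \<exists>u. u \<in> units_T p n \<and> 1 - w ^ Suc s = u * tunif p n ^ (p ^ (n - 1))"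
  proof
    fix s assume s: "s \<in> {..<p-1}"
    define i where "i = p ^ (n - 1) * Suc s"
    have sp: "Suc s < p" using s by auto
    have i0: "0 < i" unfolding i_def using p0 by simp
    have i1: "i < p ^ n" unfolding i_def NM by (rule mult_strict_left_mono) (use sp p0 in auto)
    note i0 = i0 i1
    have nd: "\<not> p dvd Suc s" using s by (auto dest: dvd_imp_le)
    have "multiplicity p i = n - 1" unfolding i_def by (rule mult_pow_times[OF pr _ nd]) simp
    then show "\<exists>u. u \<in> units_T p n \<and> 1 - w ^ Suc s = u * tunif p n ^ (p ^ (n - 1))"
      using one_minus_zeta_pow[OF pr i0] unfolding w_def power_mult[symmetric] i_def by auto
  qed
  from bchoice[OF this] obtain uf where uf: "\<forall>s\<in>{..<p-1}. uf s \<in> units_T p n \<and> 1 - w ^ Suc s = uf s * tunif p n ^ (p ^ (n - 1))"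
    by blast
  have "(of_nat p :: complex) = (\<Prod>s<p - 1. uf s * tunif p n ^ (p ^ (n - 1)))"
    unfolding pe[symmetric] using uf by (intro prod.cong) auto
  also have "\<dots> = (\<Prod>s<p - 1. uf s) * tunif p n ^ ((p - 1) * p ^ (n - 1))"
    by (simp add: prod.distrib power_mult[symmetric] mult.commute)
  finally show ?thesis using units_prod[OF pr, of "{..<p-1}" uf] uf by blast
qed

lemma clear_denom:
  assumes pr: "prime p"
  shows "(\<forall>i. c i \<in> Zloc p) \<Longrightarrow> \<exists>B a. \<not> int p dvd B \<and> of_int B * (\<Sum>i<m. c i * z ^ i) = (\<Sum>i<m. of_int (a i) * z ^ i)"
proof (induct m)
  case 0
  have "\<not> int p dvd 1" using pr by (meson not_prime_unit prime_nat_int_transfer zdvd1_eq)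
  then show ?case by (intro exI[of _ 1]) auto
next
  case (Suc m)
  then obtain B a where Ba: "\<not> int p dvd B" "of_int B * (\<Sum>i<m. c i * z ^ i) = (\<Sum>i<m. of_int (a i) * z ^ i)"
    by blast
  obtain al be where ab: "c m = of_int al / of_int be" "\<not> int p dvd be" using Suc(2) unfolding Zloc_def by blast
  have be0: "be \<noteq> 0" using ab by auto
  have pi: "prime (int p)" using pr by simp
  define a' where "a' = (\<lambda>i. if i < m then be * a i else B * al)"
  have "of_int (B * be) * (\<Sum>i<Suc m. c i * z ^ i) = of_int be * (of_int B * (\<Sum>i<m. c i * z ^ i)) + of_int B * of_int al * z ^ m"
    using be0 ab by (simp add: algebra_simps)
  also have "\<dots> = (\<Sum>i<Suc m. of_int (a' i) * z ^ i)"
    unfolding Ba(2) by (simp add: a'_def sum_distrib_left algebra_simps)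
  finally show ?case using Ba(1) ab(2) pi by (intro exI[of _ "B * be"] exI[of _ a']) (auto simp: prime_dvd_mult_iff)
qed

lemma det_cong:
  fixes A A' :: "int mat"
  assumes A: "A \<in> carrier_mat N N" and A': "A' \<in> carrier_mat N N"
    and c: "\<And>i j. i < N \<Longrightarrow> j < N \<Longrightarrow> [A $$ (i, j) = A' $$ (i, j)] (mod q)"
  shows "[det A = det A'] (mod q)"
  unfolding det_def'[OF A] det_def'[OF A']
proof (rule cong_sum, rule cong_mult[OF cong_refl], rule cong_prod)
  fix pp i assume "pp \<in> {pp. pp permutes {0..<N}}" "i \<in> {0..<N}"
  then show "[A $$ (i, pp i) = A' $$ (i, pp i)] (mod q)" by (intro c) (auto simp: permutes_in_image)
qed

lemma inv_p_notin_T: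
  assumes pr: "prime p" and n1: "n \<ge> 1"
  shows "inverse (of_nat p :: complex) \<notin> Tring p n"
proof
  assume "inverse (of_nat p :: complex) \<in> Tring p n"
  then obtain m c where x: "inverse (of_nat p :: complex) = (\<Sum>i<m. c i * zeta p n ^ i)" and c: "\<forall>i. c i \<in> Zloc p"
    unfolding Tring_def by auto
  obtain B a where Ba: "\<not> int p dvd B" "of_int B * inverse (of_nat p) = (\<Sum>i<m. of_int (a i) * zeta p n ^ i)"
    using clear_denom[OF pr c, where m=m and z="zeta p n"] unfolding x by blast
  have p0: "p > 0" using pr prime_gt_0_nat by blast
  define N where "N = p ^ n"
  have N0: "N > 0" unfolding N_def using p0 by simp
  define Mf where "Mf = (\<lambda>r c. (\<Sum>i<m. if c = (r + i) mod N then a i else 0))"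
  define K where "K = mat N N (\<lambda>(r, c). int p * Mf r c - (if r = c then B else 0))"
  define v where "v = vec N (\<lambda>c. zeta p n ^ c)"
  have K: "K \<in> carrier_mat N N" unfolding K_def by simp
  have Kc: "map_mat of_int K \<in> carrier_mat N N" unfolding K_def by simp
  have Kv: "map_mat of_int K *\<^sub>v v = 0\<^sub>v N"
  proof (rule eq_vecI)
    fix r assume r: "r < dim_vec (0\<^sub>v N :: complex vec)"
    then have r: "r < N" by simp
    have "(map_mat of_int K *\<^sub>v v) $ r = (\<Sum>c<N. of_int (int p * Mf r c - (if r = c then B else 0)) * zeta p n ^ c)"
      unfolding K_def v_def using r by (auto simp: scalar_prod_def lessThan_atLeast0 intro!: sum.cong)
    also have "\<dots> = (\<Sum>c<N. of_nat p * (of_int (Mf r c) * zeta p n ^ c) - (if c = r then of_int B * zeta p n ^ r else 0))"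
      by (rule sum.cong) (auto simp: algebra_simps)
    also have "\<dots> = of_nat p * (\<Sum>c<N. of_int (Mf r c) * zeta p n ^ c) - of_int B * zeta p n ^ r"
      using r by (simp add: sum_subtractf sum_distrib_left)
    also have "(\<Sum>c<N. of_int (Mf r c) * zeta p n ^ c) = (\<Sum>i<m. of_int (a i) * zeta p n ^ ((r + i) mod N))"
    proof -
      have "(\<Sum>c<N. of_int (Mf r c) * zeta p n ^ c) = (\<Sum>c<N. \<Sum>i<m. (if c = (r + i) mod N then of_int (a i) * zeta p n ^ c else 0))"
        unfolding Mf_def of_int_sum by (auto simp: sum_distrib_right intro!: sum.cong)
      also have "\<dots> = (\<Sum>i<m. \<Sum>c<N. (if c = (r + i) mod N then of_int (a i) * zeta p n ^ c else 0))"
        by (rule sum.swap)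
      also have "\<dots> = (\<Sum>i<m. of_int (a i) * zeta p n ^ ((r + i) mod N))"
        using N0 by (simp add: sum.delta)
      finally show ?thesis .
    qed
    also have "(\<Sum>i<m. of_int (a i) * zeta p n ^ ((r + i) mod N)) = zeta p n ^ r * (\<Sum>i<m. of_int (a i) * zeta p n ^ i)"
      unfolding N_def zeta_pow_mod[OF p0, symmetric] by (simp add: sum_distrib_left power_add algebra_simps)
    also have "\<dots> = zeta p n ^ r * (of_int B * inverse (of_nat p))" using Ba(2) by simp
    finally show "(map_mat of_int K *\<^sub>v v) $ r = (0\<^sub>v N :: complex vec) $ r" using r p0 by simp
  qed (simp add: K_def)
  have v0: "v \<noteq> 0\<^sub>v N"
  proof
    assume "v = 0\<^sub>v N"
    then have "v $ 0 = 0" using N0 by simp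
    then show False unfolding v_def using N0 by simp
  qed
  have "det (map_mat (of_int :: int \<Rightarrow> complex) K) = 0"
    unfolding det_0_iff_vec_prod_zero[OF Kc] using Kv v0 by (intro exI[of _ v]) (auto simp: v_def)
  then have dK: "det K = 0" by (metis of_int_eq_0_iff of_int_hom.hom_det)
  have "[K $$ (i, j) = ((- B) \<cdot>\<^sub>m 1\<^sub>m N) $$ (i, j)] (mod int p)" if "i < N" "j < N" for i j
  proof -
    have "K $$ (i, j) - ((- B) \<cdot>\<^sub>m 1\<^sub>m N) $$ (i, j) = int p * Mf i j" using that by (simp add: K_def)
    then show ?thesis unfolding cong_iff_dvd_diff by simp
  qed
  then have "[det K = det ((- B) \<cdot>\<^sub>m 1\<^sub>m N)] (mod int p)"
    by (intro det_cong[OF K]) auto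
  also have "det ((- B) \<cdot>\<^sub>m 1\<^sub>m N) = (- B) ^ N" by simp
  finally have "[0 = (- B) ^ N] (mod int p)" unfolding dK .
  then have "int p dvd (- B) ^ N" unfolding cong_iff_dvd_diff by simp
  then have "int p dvd (- B)" by (rule prime_dvd_power[rotated]) (use pr in simp)
  then have "int p dvd B" by simp
  then show False using Ba(1) by simp
qed

lemma t_nonunit:
  assumes pr: "prime p" and n1: "n \<ge> 1" and y: "y \<in> Tring p n"
  shows "tunif p n * y \<noteq> 1"
proof
  assume ty: "tunif p n * y = 1"
  obtain u where u: "u \<in> units_T p n" "(of_nat p :: complex) = u * tunif p n ^ ((p - 1) * p ^ (n - 1))"
    using p_unit_pow[OF pr n1] by blast
  have ty': "inverse (tunif p n) = y" using ty by (rule inverse_unique)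
  have "inverse (of_nat p :: complex) = inverse u * inverse (tunif p n) ^ ((p - 1) * p ^ (n - 1))"
    unfolding u(2) by (simp add: power_inverse)
  then have "inverse (of_nat p :: complex) = inverse u * y ^ ((p - 1) * p ^ (n - 1))"
    unfolding ty' .
  moreover have "inverse u * y ^ ((p - 1) * p ^ (n - 1)) \<in> Tring p n"
    using pr u y by (auto intro!: subr_mult subr_power T_subr units_invT)
  ultimately show False using inv_p_notin_T[OF pr n1] by simp
qed



lemma subr_sign: "subr S \<Longrightarrow> (of_int (sign q) :: complex) \<in> S"
  by (rule subr_of_int)

lemma det_in_subr:
  assumes S: "subr S" and M: "M \<in> carrier_mat N N" and MS: "mat_over S M"
  shows "det M \<in> S"
  unfolding det_def'[OF M]
proof (rule subr_sum[OF S], rule subr_mult[OF S subr_sign[OF S]], rule subr_prod[OF S])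
  fix q i assume "q \<in> {q. q permutes {0..<N}}" "i \<in> {0..<N}"
  then show "M $$ (i, q i) \<in> S" using MS M unfolding mat_over_def by (auto simp: permutes_in_image)
qed

lemma mat_over_mult:
  assumes S: "subr S" and A: "A \<in> carrier_mat a b" and B: "B \<in> carrier_mat b c"
    and AS: "mat_over S A" and BS: "mat_over S B"
  shows "mat_over S (A * B)"
  unfolding mat_over_def
proof (intro allI impI)
  fix i j assume "i < dim_row (A * B)" "j < dim_col (A * B)"
  then have ij: "i < a" "j < c" using A B by auto
  have "(A * B) $$ (i, j) = (\<Sum>l\<in>{0..<b}. A $$ (i, l) * B $$ (l, j))"
    using A B ij by (simp add: scalar_prod_def)
  also have "\<dots> \<in> S" using AS BS A B ij unfolding mat_over_def
    by (intro subr_sum[OF S] subr_mult[OF S]) auto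
  finally show "(A * B) $$ (i, j) \<in> S" .
qed

lemma adj_over:
  assumes S: "subr S" and M: "M \<in> carrier_mat N N" and MS: "mat_over S M"
  shows "mat_over S (adj_mat M)"
  unfolding mat_over_def
proof (intro allI impI)
  fix i j assume "i < dim_row (adj_mat M)" "j < dim_col (adj_mat M)"
  then have ij: "i < N" "j < N" using M by (auto simp: adj_mat_def)
  have md: "mat_delete M j i \<in> carrier_mat (N - 1) (N - 1)" using mat_delete_carrier[OF M] .
  have "mat_over S (mat_delete M j i)" unfolding mat_over_def
  proof (intro allI impI)
    fix a b assume "a < dim_row (mat_delete M j i)" "b < dim_col (mat_delete M j i)"
    then have ab: "a < N - 1" "b < N - 1" using M by auto
    then show "mat_delete M j i $$ (a, b) \<in> S" using MS M unfolding mat_over_def mat_delete_def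
      by auto
  qed
  then have "det (mat_delete M j i) \<in> S" by (rule det_in_subr[OF S md])
  moreover have "(-1 :: complex) ^ (j + i) \<in> S" using S by (intro subr_power subr_uminus subr_1)
  ultimately show "adj_mat M $$ (i, j) \<in> S" using M ij
    unfolding adj_mat_def cofactor_def by (auto intro: subr_mult[OF S])
qed

lemma det1_GL:
  assumes pr: "prime p" and U: "U \<in> carrier_mat N N" and UT: "mat_over (Tring p n) U" and d: "det U = 1"
  shows "GL_T p n N U" "GL_T p n N (adj_mat U)" "adj_mat U * U = 1\<^sub>m N" "U * adj_mat U = 1\<^sub>m N"
proof -
  have S: "subr (Tring p n)" by (rule T_subr[OF pr])
  note adj = adj_mat[OF U]
  have 1: "(1::complex) \<cdot>\<^sub>m 1\<^sub>m N = 1\<^sub>m N" by (rule eq_matI) auto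
  show aU: "adj_mat U * U = 1\<^sub>m N" "U * adj_mat U = 1\<^sub>m N" using adj d 1 by auto
  have aT: "mat_over (Tring p n) (adj_mat U)" by (rule adj_over[OF S U UT])
  show "GL_T p n N U" unfolding GL_T_def using U UT adj(1) aT aU by blast
  show "GL_T p n N (adj_mat U)" unfolding GL_T_def using U UT adj(1) aT aU by blast
qed

lemma prod_list_diag_one:
  assumes "\<And>i. i < dim_row U \<Longrightarrow> U $$ (i, i) = (1::complex)"
  shows "prod_list (diag_mat U) = 1"
  unfolding prod_list_diag_prod using assms by (intro prod.neutral) auto

section \<open>q-binomials\<close>

definition Fq :: "complex \<Rightarrow> nat \<Rightarrow> nat \<Rightarrow> complex" where
  "Fq q j m = (\<Prod>l<m. (q ^ j - q ^ l))"

fun qb :: "complex \<Rightarrow> nat \<Rightarrow> nat \<Rightarrow> complex" where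
  "qb q j 0 = 1"
| "qb q 0 (Suc m) = 0"
| "qb q (Suc j) (Suc m) = qb q j m + q ^ Suc m * qb q j (Suc m)"

lemma qb_lt: "j < m \<Longrightarrow> qb q j m = 0"
proof (induct j arbitrary: m)
  case 0
  then show ?case by (cases m) auto
next
  case (Suc j)
  then show ?case by (cases m) auto
qed

lemma qb_diag: "qb q j j = 1"
  by (induct j) (auto simp: qb_lt)

lemma Fq_Suc_right: "Fq q j (Suc m) = Fq q j m * (q ^ j - q ^ m)"
  unfolding Fq_def by simp

lemma Fq_Suc_Suc: "Fq q (Suc j) (Suc m) = (q ^ Suc j - 1) * q ^ m * Fq q j m"
proof -
  have "Fq q (Suc j) (Suc m) = (q ^ Suc j - 1) * (\<Prod>l<m. (q ^ Suc j - q ^ Suc l))"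
    unfolding Fq_def prod.lessThan_Suc_shift by simp
  also have "(\<Prod>l<m. (q ^ Suc j - q ^ Suc l)) = (\<Prod>l<m. q * (q ^ j - q ^ l))"
    by (simp add: algebra_simps)
  also have "\<dots> = q ^ m * Fq q j m" unfolding Fq_def by (simp add: prod.distrib)
  finally show ?thesis by (simp add: ac_simps)
qed

lemma Fq_0: "Fq q 0 (Suc m) = 0"
  unfolding Fq_def prod.lessThan_Suc_shift by simp

lemma Fq_eq: "Fq q j m = qb q j m * Fq q m m"
proof (induct j arbitrary: m)
  case 0
  then show ?case by (cases m) (simp add: Fq_def, simp only: Fq_0 qb.simps mult_zero_left)
next
  case (Suc j)
  show ?case
  proof (cases m)
    case 0
    then show ?thesis by (simp add: Fq_def)
  next
    case (Suc m')
    have IH1: "Fq q j m' = qb q j m' * Fq q m' m'" by (rule Suc.hyps)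
    have IH2: "Fq q j (Suc m') = qb q j (Suc m') * Fq q (Suc m') (Suc m')" by (rule Suc.hyps)
    have FF: "Fq q (Suc m') (Suc m') = (q ^ Suc m' - 1) * q ^ m' * Fq q m' m'" by (rule Fq_Suc_Suc)
    have "Fq q (Suc j) (Suc m') = (q ^ Suc j - 1) * q ^ m' * Fq q j m'" by (rule Fq_Suc_Suc)
    also have "\<dots> = qb q j m' * ((q ^ Suc m' - 1) * q ^ m' * Fq q m' m') + q ^ Suc m' * Fq q j (Suc m')"
      unfolding Fq_Suc_right IH1 by (simp add: algebra_simps)
    also have "\<dots> = qb q (Suc j) (Suc m') * Fq q (Suc m') (Suc m')"
      unfolding IH2 FF by (simp add: algebra_simps)
    finally show ?thesis using Suc by simp
  qed
qed

lemma qb_T: "prime p \<Longrightarrow> qb (zeta p n) j m \<in> Tring p n"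
proof (induct j arbitrary: m)
  case 0
  then show ?case by (cases m) (auto simp: T_subr subr_1 subr_0)
next
  case (Suc j)
  then show ?case by (cases m) (auto simp: T_subr subr_1 intro!: subr_add subr_mult subr_power zeta_T)
qed



definition nw :: "complex \<Rightarrow> nat \<Rightarrow> complex poly" where
  "nw z m = (\<Prod>l<m. [:- (z ^ l), 1:])"

lemma nw_degree: "degree (nw z m) = m"
  unfolding nw_def by (subst degree_prod_eq_sum_degree) auto

lemma nw_lead: "poly.coeff (nw z m) m = 1"
proof -
  have "lead_coeff (nw z m) = 1" unfolding nw_def by (simp add: lead_coeff_prod)
  then show ?thesis using nw_degree by metis
qed

lemma nw_poly: "poly (nw z m) x = (\<Prod>l<m. (x - z ^ l))"
  unfolding nw_def by (simp add: poly_prod)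

lemma nw_over: "prime p \<Longrightarrow> nw (zeta p n) m \<in> polys_over (Tring p n)"
  unfolding nw_def using T_subr
  by (intro polys_over_prod polys_over_linear) (auto intro!: subr_uminus subr_power zeta_T)

lemma poly_sum_N: fixes q :: "complex poly" assumes d: "degree q < N" shows "poly q x = (\<Sum>i<N. poly.coeff q i * x ^ i)"
proof -
  have "poly q x = (\<Sum>i\<le>degree q. poly.coeff q i * x ^ i)" by (rule poly_altdef)
  also have "\<dots> = (\<Sum>i<N. poly.coeff q i * x ^ i)"
    by (rule sum.mono_neutral_left) (use d in \<open>auto simp: coeff_eq_0\<close>)
  finally show ?thesis .
qed

definition Cm :: "nat \<Rightarrow> nat \<Rightarrow> complex mat" where
  "Cm p n = mat (p ^ n) (p ^ n) (\<lambda>(i, m). poly.coeff (nw (zeta p n) m) i)"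

definition Gm :: "nat \<Rightarrow> nat \<Rightarrow> complex mat" where
  "Gm p n = mat (p ^ n) (p ^ n) (\<lambda>(j, m). qb (zeta p n) j m)"

definition Dm :: "nat \<Rightarrow> nat \<Rightarrow> complex mat" where
  "Dm p n = mat (p ^ n) (p ^ n) (\<lambda>(j, m). if j = m then Fq (zeta p n) m m else 0)"

lemma AC_GD: "wedderburn_mat p n * Cm p n = Gm p n * Dm p n"
proof (rule eq_matI)
  fix i j assume "i < dim_row (Gm p n * Dm p n)" "j < dim_col (Gm p n * Dm p n)"
  then have ij: "i < p ^ n" "j < p ^ n" by (auto simp: Gm_def Dm_def)
  have "(wedderburn_mat p n * Cm p n) $$ (i, j) = (\<Sum>k\<in>{0..<p ^ n}. zeta p n ^ (k * i) * poly.coeff (nw (zeta p n) j) k)"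
    using ij by (simp add: wedderburn_mat_def Cm_def scalar_prod_def)
  also have "\<dots> = (\<Sum>k<p ^ n. poly.coeff (nw (zeta p n) j) k * (zeta p n ^ i) ^ k)"
    unfolding lessThan_atLeast0 by (intro sum.cong refl) (simp add: power_mult[symmetric] mult.commute)
  also have "\<dots> = poly (nw (zeta p n) j) (zeta p n ^ i)"
    using ij by (intro poly_sum_N[symmetric]) (simp add: nw_degree)
  also have "\<dots> = Fq (zeta p n) i j" unfolding nw_poly Fq_def by simp
  also have "\<dots> = qb (zeta p n) i j * Fq (zeta p n) j j" by (rule Fq_eq)
  also have "\<dots> = (\<Sum>k\<in>{0..<p ^ n}. if k = j then qb (zeta p n) i j * Fq (zeta p n) j j else 0)"
    using ij by simp
  also have "\<dots> = (\<Sum>k\<in>{0..<p ^ n}. qb (zeta p n) i k * (if k = j then Fq (zeta p n) j j else 0))"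
    by (rule sum.cong) auto
  also have "\<dots> = (Gm p n * Dm p n) $$ (i, j)"
    using ij by (simp add: Gm_def Dm_def scalar_prod_def)
  finally show "(wedderburn_mat p n * Cm p n) $$ (i, j) = (Gm p n * Dm p n) $$ (i, j)" .
qed (auto simp: wedderburn_mat_def Gm_def Dm_def Cm_def)

lemma Cm_carrier: "Cm p n \<in> carrier_mat (p ^ n) (p ^ n)" unfolding Cm_def by simp
lemma Gm_carrier: "Gm p n \<in> carrier_mat (p ^ n) (p ^ n)" unfolding Gm_def by simp
lemma Dm_carrier: "Dm p n \<in> carrier_mat (p ^ n) (p ^ n)" unfolding Dm_def by simp
lemma A_carrier: "wedderburn_mat p n \<in> carrier_mat (p ^ n) (p ^ n)" unfolding wedderburn_mat_def by simp

lemma Cm_over: "prime p \<Longrightarrow> mat_over (Tring p n) (Cm p n)"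
  unfolding mat_over_def Cm_def using nw_over unfolding polys_over_def by auto

lemma Gm_over: "prime p \<Longrightarrow> mat_over (Tring p n) (Gm p n)"
  unfolding mat_over_def Gm_def using qb_T by auto

lemma Cm_det: "det (Cm p n) = 1"
proof -
  have "upper_triangular (Cm p n)" unfolding upper_triangular_def Cm_def
    by (auto simp: coeff_eq_0 nw_degree)
  then have "det (Cm p n) = prod_list (diag_mat (Cm p n))" by (rule det_upper_triangular[OF _ Cm_carrier])
  also have "\<dots> = 1" by (rule prod_list_diag_one) (auto simp: Cm_def nw_lead)
  finally show ?thesis .
qed

lemma Gm_det: "det (Gm p n) = 1"
proof -
  have "det (Gm p n) = prod_list (diag_mat (Gm p n))"
    by (rule det_lower_triangular[OF _ Gm_carrier]) (auto simp: Gm_def qb_lt)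
  also have "\<dots> = 1" by (rule prod_list_diag_one) (auto simp: Gm_def qb_diag)
  finally show ?thesis .
qed

definition ev :: "nat \<Rightarrow> nat \<Rightarrow> nat" where
  "ev p m = (\<Sum>d\<in>{1..m}. p ^ multiplicity p d)"

lemma sum_rev: "(\<Sum>l<m. f (m - l)) = (\<Sum>d\<in>{1..m}. (f d :: nat))" for m :: nat
proof (induct m)
  case 0
  then show ?case by simp
next
  case (Suc m)
  have "(\<Sum>l<Suc m. f (Suc m - l)) = f (Suc m) + (\<Sum>l<m. f (m - l))"
    unfolding sum.lessThan_Suc_shift by simp
  also have "\<dots> = (\<Sum>d\<in>{1..Suc m}. f d)" unfolding Suc by (simp add: sum.cl_ivl_Suc)
  finally show ?case .
qed

lemma Fq_diag_unit:
  assumes pr: "prime p" and m: "m < p ^ n"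
  shows "\<exists>u \<in> units_T p n. Fq (zeta p n) m m = u * tunif p n ^ ev p m"
proof -
  have "\<forall>l\<in>{..<m}. \<exists>u. u \<in> units_T p n \<and> zeta p n ^ m - zeta p n ^ l = u * tunif p n ^ (p ^ multiplicity p (m - l))"
  proof
    fix l assume l: "l \<in> {..<m}"
    have i: "0 < m - l" "m - l < p ^ n" using l m by auto
    obtain u where u: "u \<in> units_T p n" "1 - zeta p n ^ (m - l) = u * tunif p n ^ (p ^ multiplicity p (m - l))"
      using one_minus_zeta_pow[OF pr i] by blast
    have "zeta p n ^ m = zeta p n ^ l * zeta p n ^ (m - l)" using l by (simp add: power_add[symmetric])
    then have "zeta p n ^ m - zeta p n ^ l = (- (zeta p n ^ l)) * (1 - zeta p n ^ (m - l))"
      by (simp add: algebra_simps)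
    also have "\<dots> = (- (zeta p n ^ l) * u) * tunif p n ^ (p ^ multiplicity p (m - l))"
      unfolding u(2) by (simp add: ac_simps)
    finally show "\<exists>u. u \<in> units_T p n \<and> zeta p n ^ m - zeta p n ^ l = u * tunif p n ^ (p ^ multiplicity p (m - l))"
      using units_mult[OF pr units_uminus[OF pr units_power[OF pr units_zeta[OF pr]]] u(1)] by blast
  qed
  from bchoice[OF this] obtain uf where
    uf: "\<forall>l\<in>{..<m}. uf l \<in> units_T p n \<and> zeta p n ^ m - zeta p n ^ l = uf l * tunif p n ^ (p ^ multiplicity p (m - l))"
    by blast
  have "Fq (zeta p n) m m = (\<Prod>l<m. uf l * tunif p n ^ (p ^ multiplicity p (m - l)))"
    unfolding Fq_def using uf by (intro prod.cong) auto
  also have "\<dots> = (\<Prod>l<m. uf l) * tunif p n ^ (\<Sum>l<m. p ^ multiplicity p (m - l))"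
    by (simp add: prod.distrib power_sum)
  also have "(\<Sum>l<m. p ^ multiplicity p (m - l)) = ev p m"
    unfolding ev_def by (rule sum_rev)
  finally show ?thesis using units_prod[OF pr, of "{..<m}" uf] uf by blast
qed

definition uu :: "nat \<Rightarrow> nat \<Rightarrow> nat \<Rightarrow> complex" where
  "uu p n m = (SOME u. u \<in> units_T p n \<and> Fq (zeta p n) m m = u * tunif p n ^ ev p m)"

lemma uu: assumes "prime p" "m < p ^ n"
  shows "uu p n m \<in> units_T p n" "Fq (zeta p n) m m = uu p n m * tunif p n ^ ev p m"
proof -
  from Fq_diag_unit[OF assms] have "\<exists>u. u \<in> units_T p n \<and> Fq (zeta p n) m m = u * tunif p n ^ ev p m" by blast
  from someI_ex[OF this] show "uu p n m \<in> units_T p n" "Fq (zeta p n) m m = uu p n m * tunif p n ^ ev p m"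
    unfolding uu_def by blast+
qed

lemma ev_mono: "k \<le> l \<Longrightarrow> ev p k \<le> ev p l"
  unfolding ev_def by (rule sum_mono2) auto

lemma existence:
  assumes pr: "prime p"
  shows "elem_div_vals p n (p ^ n) (wedderburn_mat p n) (ev p)"
proof -
  define N where "N = p ^ n"
  have G: "Gm p n \<in> carrier_mat N N" and C: "Cm p n \<in> carrier_mat N N" and D: "Dm p n \<in> carrier_mat N N"
    and A: "wedderburn_mat p n \<in> carrier_mat N N"
    unfolding N_def by (rule Gm_carrier Cm_carrier Dm_carrier A_carrier)+
  note GG = det1_GL[OF pr G Gm_over[OF pr] Gm_det]
  note CC = det1_GL[OF pr C Cm_over[OF pr] Cm_det]
  have aG: "adj_mat (Gm p n) \<in> carrier_mat N N" using adj_mat[OF G] by blast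
  have "adj_mat (Gm p n) * wedderburn_mat p n * Cm p n = adj_mat (Gm p n) * (wedderburn_mat p n * Cm p n)"
    by (rule assoc_mult_mat[OF aG A C])
  also have "\<dots> = adj_mat (Gm p n) * (Gm p n * Dm p n)" unfolding AC_GD ..
  also have "\<dots> = adj_mat (Gm p n) * Gm p n * Dm p n" by (rule assoc_mult_mat[OF aG G D, symmetric])
  also have "\<dots> = Dm p n" unfolding GG(3) using D by simp
  also have "\<dots> = mat N N (\<lambda>(i, k). if i = k then uu p n i * tunif p n ^ ev p i else 0)"
    unfolding Dm_def N_def by (rule eq_matI) (auto simp: uu(2)[OF pr])
  finally have eq: "adj_mat (Gm p n) * wedderburn_mat p n * Cm p n = mat N N (\<lambda>(i, k). if i = k then uu p n i * tunif p n ^ ev p i else 0)" .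
  show ?thesis unfolding elem_div_vals_def N_def[symmetric]
  proof (intro conjI allI impI)
    show "\<And>k l. k \<le> l \<and> l < N \<Longrightarrow> ev p k \<le> ev p l" using ev_mono by blast
    show "\<exists>P Q u. GL_T p n N P \<and> GL_T p n N Q \<and> (\<forall>k<N. u k \<in> units_T p n) \<and>
        P * wedderburn_mat p n * Q = mat N N (\<lambda>(i, k). if i = k then u i * tunif p n ^ ev p i else 0)"
      using GG(2) CC(1) eq uu(1)[OF pr] unfolding N_def by blast
  qed
qed



definition tdv :: "nat \<Rightarrow> nat \<Rightarrow> complex \<Rightarrow> complex \<Rightarrow> bool" where
  "tdv p n c x = (\<exists>y \<in> Tring p n. x = c * y)"

lemma tdv_0: "prime p \<Longrightarrow> tdv p n c 0"
  unfolding tdv_def using subr_0[OF T_subr] by (intro bexI[of _ 0]) auto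

lemma tdv_add: assumes "prime p" "tdv p n c x" "tdv p n c y" shows "tdv p n c (x + y)"
proof -
  obtain a b where ab: "a \<in> Tring p n" "x = c * a" "b \<in> Tring p n" "y = c * b" using assms unfolding tdv_def by blast
  then have "x + y = c * (a + b)" by (simp add: distrib_left)
  moreover have "a + b \<in> Tring p n" using ab assms(1) by (intro subr_add T_subr)
  ultimately show ?thesis unfolding tdv_def by blast
qed

lemma tdv_multT: "prime p \<Longrightarrow> a \<in> Tring p n \<Longrightarrow> tdv p n c x \<Longrightarrow> tdv p n c (a * x)"
  unfolding tdv_def by (auto intro!: bexI subr_mult[OF T_subr] simp: ac_simps)

lemma tdv_sum: "prime p \<Longrightarrow> (\<And>i. i \<in> A \<Longrightarrow> tdv p n c (f i)) \<Longrightarrow> tdv p n c (sum f A)"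
  by (induct A rule: infinite_finite_induct) (auto simp: tdv_0 tdv_add)

lemma tdv_mono: assumes "prime p" "tdv p n (tunif p n ^ a) x" "b \<le> a" shows "tdv p n (tunif p n ^ b) x"
proof -
  obtain y where y: "y \<in> Tring p n" "x = tunif p n ^ a * y" using assms unfolding tdv_def by blast
  have "x = tunif p n ^ b * (tunif p n ^ (a - b) * y)" using y assms(3)
    by (simp add: mult.assoc[symmetric] power_add[symmetric])
  moreover have "tunif p n ^ (a - b) * y \<in> Tring p n" using y assms(1)
    by (auto intro!: subr_mult subr_power T_subr subr_diff subr_1 zeta_T simp: tunif_def)
  ultimately show ?thesis unfolding tdv_def by blast
qed

lemma tdv_prod: assumes pr: "prime p" shows "finite I \<Longrightarrow> (\<And>i. i \<in> I \<Longrightarrow> tdv p n (tunif p n ^ a i) (x i))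
  \<Longrightarrow> tdv p n (tunif p n ^ (\<Sum>i\<in>I. a i)) (\<Prod>i\<in>I. x i)"
proof (induct I rule: finite_induct)
  case empty
  then show ?case unfolding tdv_def using subr_1[OF T_subr[OF pr]] by auto
next
  case (insert i I)
  then obtain y z where yz: "y \<in> Tring p n" "x i = tunif p n ^ a i * y" "z \<in> Tring p n"
    "(\<Prod>i\<in>I. x i) = tunif p n ^ (\<Sum>i\<in>I. a i) * z" unfolding tdv_def by blast
  then have "(\<Prod>i\<in>insert i I. x i) = tunif p n ^ (\<Sum>i\<in>insert i I. a i) * (y * z)"
    using insert by (simp add: power_add ac_simps)
  moreover have "y * z \<in> Tring p n" using yz pr by (auto intro: subr_mult T_subr)
  ultimately show ?case unfolding tdv_def by blast
qed

definition MinDiv :: "nat \<Rightarrow> nat \<Rightarrow> nat \<Rightarrow> complex \<Rightarrow> complex mat \<Rightarrow> nat \<Rightarrow> bool" where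
  "MinDiv p n N c M k = (\<forall>f g. (\<forall>i<k. f i < N) \<longrightarrow> (\<forall>j<k. g j < N) \<longrightarrow>
     tdv p n c (det (mat k k (\<lambda>(i, j). M $$ (f i, g j)))))"

lemma MinDiv_left:
  assumes pr: "prime p" and M: "M \<in> carrier_mat N N" and X: "X \<in> carrier_mat N N"
    and XT: "mat_over (Tring p n) X" and MD: "MinDiv p n N c M k"
  shows "MinDiv p n N c (X * M) k"
  unfolding MinDiv_def
proof (intro allI impI)
  fix f g assume f: "\<forall>i<k. f i < N" and g: "\<forall>j<k. g j < N"
  define A' where "A' = mat k N (\<lambda>(i, l). X $$ (f i, l))"
  define B' where "B' = mat N k (\<lambda>(l, j). M $$ (l, g j))"
  have A': "A' \<in> carrier_mat k N" and B': "B' \<in> carrier_mat N k" unfolding A'_def B'_def by auto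
  have eq: "mat k k (\<lambda>(i, j). (X * M) $$ (f i, g j)) = A' * B'"
    by (rule eq_matI) (use f g M X in \<open>auto simp: A'_def B'_def scalar_prod_def intro!: sum.cong\<close>)
  define H where "H = {h. (\<forall>i\<in>{0..<k}. h i \<in> {0..<N}) \<and> (\<forall>i. i \<notin> {0..<k} \<longrightarrow> h i = i)}"
  have "det (A' * B') = (\<Sum>h\<in>H. det (mat\<^sub>r k k (\<lambda>i. A' $$ (i, h i) \<cdot>\<^sub>v row B' (h i))))"
    unfolding mat_mul_finsum_alt[OF A' B'] H_def
    by (rule det_linear_rows_sum) (use B' in auto)
  also have "\<dots> = (\<Sum>h\<in>H. prod (\<lambda>i. A' $$ (i, h i)) {0..<k} * det (mat\<^sub>r k k (\<lambda>i. row B' (h i))))"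
    by (intro sum.cong refl det_rows_mul) (use B' in auto)
  finally have d: "det (A' * B') = \<dots>" .
  have "tdv p n c (prod (\<lambda>i. A' $$ (i, h i)) {0..<k} * det (mat\<^sub>r k k (\<lambda>i. row B' (h i))))" if h: "h \<in> H" for h
  proof (rule tdv_multT[OF pr])
    show "prod (\<lambda>i. A' $$ (i, h i)) {0..<k} \<in> Tring p n"
      using h f XT X unfolding H_def A'_def mat_over_def by (auto intro!: subr_prod T_subr[OF pr])
    have "mat\<^sub>r k k (\<lambda>i. row B' (h i)) = mat k k (\<lambda>(i, j). M $$ (h i, g j))"
      by (rule eq_matI) (use h B' in \<open>auto simp: H_def B'_def\<close>)
    moreover have "tdv p n c (det (mat k k (\<lambda>(i, j). M $$ (h i, g j))))"
      using MD g h unfolding MinDiv_def H_def by auto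
    ultimately show "tdv p n c (det (mat\<^sub>r k k (\<lambda>i. row B' (h i))))" by simp
  qed
  then show "tdv p n c (det (mat k k (\<lambda>(i, j). (X * M) $$ (f i, g j))))"
    unfolding eq d by (intro tdv_sum[OF pr])
qed

lemma MinDiv_transpose:
  assumes M: "M \<in> carrier_mat N N" and MD: "MinDiv p n N c M k"
  shows "MinDiv p n N c (transpose_mat M) k"
  unfolding MinDiv_def
proof (intro allI impI)
  fix f g assume f: "\<forall>i<k. f i < N" and g: "\<forall>j<k. g j < N"
  have "mat k k (\<lambda>(i, j). transpose_mat M $$ (f i, g j)) = transpose_mat (mat k k (\<lambda>(i, j). M $$ (g i, f j)))"
    by (rule eq_matI) (use f g M in auto)
  moreover have "det (transpose_mat (mat k k (\<lambda>(i, j). M $$ (g i, f j)))) = det (mat k k (\<lambda>(i, j). M $$ (g i, f j)))"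
    by (rule det_transpose[of _ k]) simp
  ultimately have "det (mat k k (\<lambda>(i, j). transpose_mat M $$ (f i, g j))) = det (mat k k (\<lambda>(i, j). M $$ (g i, f j)))"
    by simp
  then show "tdv p n c (det (mat k k (\<lambda>(i, j). transpose_mat M $$ (f i, g j))))"
    using MD f g unfolding MinDiv_def by auto
qed

lemma MinDiv_right:
  assumes pr: "prime p" and M: "M \<in> carrier_mat N N" and Y: "Y \<in> carrier_mat N N"
    and YT: "mat_over (Tring p n) Y" and MD: "MinDiv p n N c M k"
  shows "MinDiv p n N c (M * Y) k"
proof -
  have "MinDiv p n N c (transpose_mat Y * transpose_mat M) k"
    by (rule MinDiv_left[OF pr _ _ _ MinDiv_transpose[OF M MD]]) (use M Y YT in \<open>auto simp: mat_over_def\<close>)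
  then have "MinDiv p n N c (transpose_mat (transpose_mat Y * transpose_mat M)) k"
    by (rule MinDiv_transpose[rotated]) (use M Y in auto)
  also have "transpose_mat (transpose_mat Y * transpose_mat M) = M * Y"
    using transpose_mult[OF M Y] by (metis transpose_transpose)
  finally show ?thesis .
qed

lemma card_sum_le:
  fixes e :: "nat \<Rightarrow> nat"
  assumes mono: "\<And>k l. k \<le> l \<Longrightarrow> l < N \<Longrightarrow> e k \<le> e l"
  shows "S \<subseteq> {..<N} \<Longrightarrow> card S = c \<Longrightarrow> (\<Sum>i<c. e i) \<le> (\<Sum>x\<in>S. e x)"
proof (induct c arbitrary: S)
  case 0
  then show ?case by simp
next
  case (Suc c)
  have fS: "finite S" using Suc(2) finite_subset by blast
  have Sne: "S \<noteq> {}" using Suc(3) by auto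
  define m where "m = Max S"
  have mS: "m \<in> S" unfolding m_def using fS Sne by simp
  have S': "card (S - {m}) = c" using Suc(3) mS fS by simp
  have IH: "(\<Sum>i<c. e i) \<le> (\<Sum>x\<in>S - {m}. e x)" using Suc(1)[OF _ S'] Suc(2) by blast
  have "S \<subseteq> {..m}" unfolding m_def using fS by auto
  then have "card S \<le> Suc m" using card_mono[of "{..m}" S] by simp
  then have cm: "c \<le> m" using Suc(3) by simp
  have mN: "m < N" using mS Suc(2) by auto
  have "(\<Sum>i<Suc c. e i) = e c + (\<Sum>i<c. e i)" by simp
  also have "\<dots> \<le> e m + (\<Sum>x\<in>S - {m}. e x)" using IH mono[OF cm mN] by simp
  also have "\<dots> = (\<Sum>x\<in>S. e x)" using sum.remove[OF fS mS, of e] by simp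
  finally show ?case .
qed

lemma MinDiv_diag:
  fixes e :: "nat \<Rightarrow> nat"
  assumes pr: "prime p" and mono: "\<And>k l. k \<le> l \<and> l < N \<Longrightarrow> e k \<le> e l"
    and u: "\<And>k. k < N \<Longrightarrow> u k \<in> Tring p n" and kN: "k \<le> N"
  shows "MinDiv p n N (tunif p n ^ (\<Sum>i<k. e i)) (mat N N (\<lambda>(i, j). if i = j then u i * tunif p n ^ e i else 0)) k"
  unfolding MinDiv_def
proof (intro allI impI)
  fix f g assume f: "\<forall>i<k. f i < N" and g: "\<forall>j<k. g j < N"
  define D where "D = mat N N (\<lambda>(i, j). if i = j then u i * tunif p n ^ e i else 0)"
  define Mk where "Mk = mat k k (\<lambda>(i, j). D $$ (f i, g j))"
  have Mk: "Mk \<in> carrier_mat k k" unfolding Mk_def by simp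
  have "tdv p n (tunif p n ^ (\<Sum>i<k. e i)) (det Mk)"
  proof (cases "inj_on f {0..<k}")
    case False
    then obtain i i' where ii: "i \<in> {0..<k}" "i' \<in> {0..<k}" "f i = f i'" "i \<noteq> i'" unfolding inj_on_def by blast
    have "row Mk i = row Mk i'" by (rule eq_vecI) (use ii Mk in \<open>auto simp: Mk_def\<close>)
    then have "det Mk = 0" by (intro det_identical_rows[OF Mk ii(4)]) (use ii in auto)
    then show ?thesis using tdv_0[OF pr] by simp
  next
    case True
    have sle: "(\<Sum>i<k. e i) \<le> (\<Sum>i\<in>{0..<k}. e (f i))"
    proof -
      have "(\<Sum>i\<in>{0..<k}. e (f i)) = (\<Sum>x\<in>f ` {0..<k}. e x)" using sum.reindex[OF True, of e] by simp
      moreover have "(\<Sum>i<k. e i) \<le> (\<Sum>x\<in>f ` {0..<k}. e x)"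
        by (rule card_sum_le[where N = N]) (use mono f True in \<open>auto simp: card_image\<close>)
      ultimately show ?thesis by simp
    qed
    have "tdv p n (tunif p n ^ (\<Sum>i\<in>{0..<k}. e (f i))) (signof q * (\<Prod>i\<in>{0..<k}. Mk $$ (i, q i)))"
      if q: "q \<in> {q. q permutes {0..<k}}" for q
    proof (rule tdv_multT[OF pr subr_sign[OF T_subr[OF pr]]], rule tdv_prod[OF pr], simp)
      fix i assume i: "i \<in> {0..<k}"
      then have qi: "q i < k" using q by (auto simp: permutes_in_image)
      have "Mk $$ (i, q i) = tunif p n ^ e (f i) * (if f i = g (q i) then u (f i) else 0)"
        using i qi f g by (simp add: Mk_def D_def ac_simps)
      moreover have "(if f i = g (q i) then u (f i) else 0) \<in> Tring p n"
        using u f i subr_0[OF T_subr[OF pr]] by auto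
      ultimately show "tdv p n (tunif p n ^ e (f i)) (Mk $$ (i, q i))" unfolding tdv_def by blast
    qed
    then have "tdv p n (tunif p n ^ (\<Sum>i\<in>{0..<k}. e (f i))) (det Mk)"
      unfolding det_def'[OF Mk] by (intro tdv_sum[OF pr])
    then show ?thesis by (rule tdv_mono[OF pr _ sle])
  qed
  then show "tdv p n (tunif p n ^ (\<Sum>i<k. e i)) (det (mat k k (\<lambda>(i, j). mat N N (\<lambda>(i, j). if i = j then u i * tunif p n ^ e i else 0) $$ (f i, g j))))"
    unfolding Mk_def D_def .
qed



section \<open>Uniqueness\<close>

lemma t_ne0: assumes pr: "prime p" and n1: "n \<ge> 1" shows "tunif p n \<noteq> 0"
proof
  have p0: "p > 0" and p1: "p > 1" using pr prime_gt_0_nat prime_gt_1_nat by blast+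
  assume "tunif p n = 0"
  then have "zeta p n ^ 1 = 1" unfolding tunif_def by simp
  then have "p ^ n dvd 1" using zeta_pow_eq_1[OF p0] by blast
  then show False using p1 n1 by (simp add: nat_dvd_1_iff_1)
qed

lemma GL_T_D: assumes "GL_T p n N P"
  obtains P' where "P \<in> carrier_mat N N" "mat_over (Tring p n) P" "P' \<in> carrier_mat N N"
    "mat_over (Tring p n) P'" "P * P' = 1\<^sub>m N" "P' * P = 1\<^sub>m N"
  using assms unfolding GL_T_def by blast

lemma diag_det:
  assumes "k \<le> N"
  shows "det (mat k k (\<lambda>(i, j). mat N N (\<lambda>(i, j). if i = j then (u i :: complex) * t ^ e i else 0) $$ (i, j)))
    = (\<Prod>i<k. u i) * t ^ (\<Sum>i<k. e i)"
proof -
  let ?M = "mat k k (\<lambda>(i, j). mat N N (\<lambda>(i, j). if i = j then (u i :: complex) * t ^ e i else 0) $$ (i, j))"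
  have "upper_triangular ?M" unfolding upper_triangular_def using assms by auto
  then have "det ?M = prod_list (diag_mat ?M)" by (rule det_upper_triangular[of _ k]) simp
  also have "\<dots> = (\<Prod>i\<in>{0..<k}. u i * t ^ e i)" unfolding prod_list_diag_prod using assms
    by (intro prod.cong) auto
  also have "\<dots> = (\<Prod>i<k. u i) * t ^ (\<Sum>i<k. e i)"
    by (simp add: prod.distrib power_sum lessThan_atLeast0)
  finally show ?thesis .
qed

lemma partial_le:
  assumes pr: "prime p" and n1: "n \<ge> 1" and A: "A \<in> carrier_mat N N"
    and E: "elem_div_vals p n N A e" and E': "elem_div_vals p n N A e'" and kN: "k \<le> N"
  shows "(\<Sum>i<k. e i) \<le> (\<Sum>i<k. e' i)"
proof -
  have S: "subr (Tring p n)" by (rule T_subr[OF pr])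
  from E obtain P Q u where mono: "\<And>k l. k \<le> l \<and> l < N \<Longrightarrow> e k \<le> e l"
    and GP: "GL_T p n N P" and GQ: "GL_T p n N Q" and u: "\<forall>k<N. u k \<in> units_T p n"
    and eq: "P * A * Q = mat N N (\<lambda>(i, k). if i = k then u i * tunif p n ^ e i else 0)"
    unfolding elem_div_vals_def by blast
  from E' obtain P' Q' u' where
    GP': "GL_T p n N P'" and GQ': "GL_T p n N Q'" and u': "\<forall>k<N. u' k \<in> units_T p n"
    and eq': "P' * A * Q' = mat N N (\<lambda>(i, k). if i = k then u' i * tunif p n ^ e' i else 0)"
    unfolding elem_div_vals_def by blast
  obtain Pi where P: "P \<in> carrier_mat N N" "mat_over (Tring p n) P" "Pi \<in> carrier_mat N N"
    "mat_over (Tring p n) Pi" "P * Pi = 1\<^sub>m N" "Pi * P = 1\<^sub>m N" using GL_T_D[OF GP] by blast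
  obtain Qi where Q: "Q \<in> carrier_mat N N" "mat_over (Tring p n) Q" "Qi \<in> carrier_mat N N"
    "mat_over (Tring p n) Qi" "Q * Qi = 1\<^sub>m N" "Qi * Q = 1\<^sub>m N" using GL_T_D[OF GQ] by blast
  obtain Pi' where P': "P' \<in> carrier_mat N N" "mat_over (Tring p n) P'" using GL_T_D[OF GP'] by blast
  obtain Qi' where Q': "Q' \<in> carrier_mat N N" "mat_over (Tring p n) Q'" using GL_T_D[OF GQ'] by blast
  define D where "D = mat N N (\<lambda>(i, k). if i = k then u i * tunif p n ^ e i else 0)"
  define s where "s = (\<Sum>i<k. e i)"
  define s' where "s' = (\<Sum>i<k. e' i)"
  have D: "D \<in> carrier_mat N N" unfolding D_def by simp
  have PA: "P * A \<in> carrier_mat N N" using P A by simp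
  have "Pi * D * Qi = Pi * (P * A * Q) * Qi" unfolding D_def eq ..
  also have "Pi * (P * A * Q) = Pi * (P * A) * Q" using assoc_mult_mat[OF P(3) PA Q(1)] by simp
  also have "Pi * (P * A) = Pi * P * A" using assoc_mult_mat[OF P(3) P(1) A] by simp
  also have "Pi * P * A * Q * Qi = A * (Q * Qi)"
    unfolding P(6) using A Q by (simp add: assoc_mult_mat[OF A Q(1) Q(3)])
  also have "\<dots> = A" unfolding Q(5) using A by simp
  finally have A_eq: "Pi * D * Qi = A" .
  have MD: "MinDiv p n N (tunif p n ^ s) D k"
    unfolding D_def s_def by (rule MinDiv_diag[OF pr mono _ kN]) (use u units_T in blast)+
  have M1: "MinDiv p n N (tunif p n ^ s) (Pi * D) k" by (rule MinDiv_left[OF pr D P(3,4) MD])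
  have PD: "Pi * D \<in> carrier_mat N N" using P(3) D by simp
  have M2: "MinDiv p n N (tunif p n ^ s) (Pi * D * Qi) k"
    by (rule MinDiv_right[OF pr PD Q(3,4) M1])
  then have M3: "MinDiv p n N (tunif p n ^ s) A k" unfolding A_eq .
  have M4: "MinDiv p n N (tunif p n ^ s) (P' * A) k" by (rule MinDiv_left[OF pr A P' M3])
  have PA': "P' * A \<in> carrier_mat N N" using P'(1) A by simp
  have M5: "MinDiv p n N (tunif p n ^ s) (P' * A * Q') k"
    by (rule MinDiv_right[OF pr PA' Q' M4])
  have "tdv p n (tunif p n ^ s) (det (mat k k (\<lambda>(i, j). (P' * A * Q') $$ (i, j))))"
    using spec[OF spec[OF M5[unfolded MinDiv_def], of "\<lambda>i. i"], of "\<lambda>i. i"] kN by auto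
  then obtain y where y: "y \<in> Tring p n" "(\<Prod>i<k. u' i) * tunif p n ^ s' = tunif p n ^ s * y"
    unfolding eq' diag_det[OF kN] tdv_def s'_def by blast
  define U where "U = (\<Prod>i<k. u' i)"
  have U: "U \<in> units_T p n" unfolding U_def using u' kN by (intro units_prod[OF pr]) auto
  show ?thesis unfolding s_def[symmetric] s'_def[symmetric]
  proof (rule ccontr)
    assume "\<not> s \<le> s'"
    then obtain d where d: "s = s' + Suc d" by (metis add_Suc_right less_imp_Suc_add not_le)
    have t0: "tunif p n \<noteq> 0" by (rule t_ne0[OF pr n1])
    have "tunif p n ^ s' * U = tunif p n ^ s' * (tunif p n ^ Suc d * y)"
      using y(2) unfolding U_def d by (simp add: power_add ac_simps)
    then have "U = tunif p n * (tunif p n ^ d * y)" using t0 by simp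
    then have "tunif p n * (tunif p n ^ d * y * inverse U) = 1" using units_ne0[OF U] by (simp add: field_simps)
    moreover have "tunif p n ^ d * y * inverse U \<in> Tring p n"
      using y(1) units_invT[OF U] S by (intro subr_mult[OF S] subr_power[OF S]) (auto simp: tunif_def intro!: subr_diff subr_1 zeta_T pr)
    ultimately show False using t_nonunit[OF pr n1] by blast
  qed
qed

lemma unique_vals:
  assumes pr: "prime p" and n1: "n \<ge> 1" and A: "A \<in> carrier_mat N N"
    and E: "elem_div_vals p n N A e" and E': "elem_div_vals p n N A e'" and i: "i < N"
  shows "e i = e' i"
proof -
  have "(\<Sum>j<k. e j) = (\<Sum>j<k. e' j)" if "k \<le> N" for k
    using partial_le[OF pr n1 A E E' that] partial_le[OF pr n1 A E' E that] by simp
  from this[of "Suc i"] this[of i] i show ?thesis by simp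
qed

section \<open>The digit formula\<close>

lemma ev_Suc: "ev p (Suc j) = ev p j + p ^ multiplicity p (Suc j)"
  unfolding ev_def by (simp add: sum.cl_ivl_Suc)

lemma ev_rec:
  assumes pr: "prime p"
  shows "int (ev p j) = int j - int (j div p) + int p * int (ev p (j div p))"
proof (induct j)
  case 0
  then show ?case by (simp add: ev_def)
next
  case (Suc j)
  have p0: "p > 0" and p1: "p > 1" using pr prime_gt_0_nat prime_gt_1_nat by blast+
  define J where "J = j div p"
  show ?case
  proof (cases "p dvd Suc j")
    case False
    then have "Suc j mod p \<noteq> 0" by (simp add: dvd_eq_mod_eq_0)
    then have "Suc j div p = J" unfolding J_def by (simp add: div_Suc)
    moreover have "multiplicity p (Suc j) = 0" using False by (rule not_dvd_imp_multiplicity_0)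
    ultimately show ?thesis using Suc unfolding ev_Suc J_def by simp
  next
    case True
    then have "Suc j mod p = 0" by (simp add: dvd_eq_mod_eq_0)
    then have dj: "Suc j div p = Suc J" unfolding J_def by (simp add: div_Suc)
    have sj: "Suc j = p * Suc J" using True dj by (metis dvd_mult_div_cancel)
    have "multiplicity p (Suc j) = Suc (multiplicity p (Suc J))"
      unfolding sj by (rule multiplicity_times_same) (use p1 in auto)
    then have "int (ev p (Suc j)) = int (ev p j) + int p * int p ^ multiplicity p (Suc J)"
      unfolding ev_Suc by simp
    also have "\<dots> = int (Suc j) - int (Suc j div p) + int p * int (ev p (Suc j div p))"
      unfolding Suc dj ev_Suc J_def[symmetric] by (simp add: algebra_simps)
    finally show ?thesis .
  qed
qed

lemma digit_Suc: "digit p j (Suc k) = digit p (j div p) k"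
  unfolding digit_def by (simp add: div_mult2_eq)

lemma digit_expansion: "j < p ^ m \<Longrightarrow> (\<Sum>k<m. int (digit p j k) * int p ^ k) = int j"
proof (induct m arbitrary: j)
  case 0
  then show ?case by simp
next
  case (Suc m)
  have jp: "j div p < p ^ m" using Suc(2) by (simp add: less_mult_imp_div_less mult.commute)
  have "(\<Sum>k<Suc m. int (digit p j k) * int p ^ k) = int (digit p j 0) + int p * (\<Sum>k<m. int (digit p (j div p) k) * int p ^ k)"
    unfolding sum.lessThan_Suc_shift digit_Suc by (simp add: sum_distrib_left ac_simps)
  also have "\<dots> = int (j mod p) + int p * int (j div p)" unfolding Suc(1)[OF jp] by (simp add: digit_def)
  also have "\<dots> = int j" by (metis mod_mult_div_eq of_nat_add of_nat_mult add.commute)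
  finally show ?case .
qed

definition Fsum :: "nat \<Rightarrow> nat \<Rightarrow> nat \<Rightarrow> int" where
  "Fsum p n j = (\<Sum>k\<le>n. (int (digit p j k) - int (digit p j (Suc k))) * int (k + 1) * int p ^ k)"

lemma Fsum_ev:
  assumes pr: "prime p"
  shows "j < p ^ n \<Longrightarrow> Fsum p n j = int (ev p j)"
proof (induct n arbitrary: j)
  case 0
  then show ?case by (simp add: Fsum_def digit_def ev_def)
next
  case (Suc n)
  have p0: "p > 0" using pr prime_gt_0_nat by blast
  define J where "J = j div p"
  have Jp: "J < p ^ n" using Suc(2) unfolding J_def by (simp add: less_mult_imp_div_less mult.commute)
  let ?d = "\<lambda>k. int (digit p J k) - int (digit p J (Suc k))"
  have "Fsum p (Suc n) j = (int (digit p j 0) - int (digit p J 0)) + (\<Sum>k\<le>n. ?d k * int (Suc k + 1) * int p ^ Suc k)"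
    unfolding Fsum_def sum.atMost_Suc_shift digit_Suc J_def by simp
  also have "(\<Sum>k\<le>n. ?d k * int (Suc k + 1) * int p ^ Suc k) = (\<Sum>k\<le>n. int p * (?d k * int (k + 1) * int p ^ k) + int p * (?d k * int p ^ k))"
    by (rule sum.cong) (simp_all add: algebra_simps)
  also have "\<dots> = int p * Fsum p n J + int p * (\<Sum>k\<le>n. ?d k * int p ^ k)"
    unfolding Fsum_def by (simp add: sum.distrib sum_distrib_left)
  also have "int p * (\<Sum>k\<le>n. ?d k * int p ^ k) = int p * int J - int J + int (digit p J 0)"
  proof -
    have "p ^ n \<le> p ^ Suc n" "p ^ n \<le> p ^ Suc (Suc n)" by (rule power_increasing, simp, use p0 in simp)+
    then have J1: "J < p ^ Suc n" and J2: "J < p ^ Suc (Suc n)" using Jp by linarith+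
    have S1: "(\<Sum>k\<le>n. int (digit p J k) * int p ^ k) = int J"
      using digit_expansion[OF J1] by (simp add: lessThan_Suc_atMost)
    note J2
    then have "(\<Sum>k<Suc (Suc n). int (digit p J k) * int p ^ k) = int J" by (rule digit_expansion)
    then have "int (digit p J 0) + (\<Sum>k<Suc n. int (digit p J (Suc k)) * int p ^ Suc k) = int J"
      unfolding sum.lessThan_Suc_shift[of _ "Suc n"] by simp
    then have S2: "int (digit p J 0) + (\<Sum>k\<le>n. int (digit p J (Suc k)) * int p ^ Suc k) = int J"
      unfolding lessThan_Suc_atMost .
    have "int p * (\<Sum>k\<le>n. ?d k * int p ^ k) = int p * (\<Sum>k\<le>n. int (digit p J k) * int p ^ k) - (\<Sum>k\<le>n. int (digit p J (Suc k)) * int p ^ Suc k)"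
      by (simp add: sum_distrib_left sum_subtractf algebra_simps)
    then show ?thesis using S1 S2 by simp
  qed
  also have "Fsum p n J = int (ev p J)" by (rule Suc(1)[OF Jp])
  finally have "Fsum p (Suc n) j = int (j mod p) + (int p - 1) * int J + int p * int (ev p J)"
    by (simp add: digit_def algebra_simps)
  also have "\<dots> = int (ev p j)" unfolding ev_rec[OF pr, of j] J_def
    by (simp add: algebra_simps) (metis mod_mult_div_eq of_nat_add of_nat_mult add.commute)
  finally show ?case .
qed

theorem proposition3p15:
  fixes p n :: nat
  assumes "prime p" and "n \<ge> 1"
  shows "(\<exists>e. elem_div_vals p n (p ^ n) (wedderburn_mat p n) e) \<and>
         (\<forall>e. elem_div_vals p n (p ^ n) (wedderburn_mat p n) e \<longrightarrow>
            (\<forall>j < p ^ n. int (e j) =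
               (\<Sum>k\<le>n. (int (digit p j k) - int (digit p j (Suc k))) * int (k + 1) * int p ^ k)))"
proof (intro conjI allI impI)
  show "\<exists>e. elem_div_vals p n (p ^ n) (wedderburn_mat p n) e" using existence[OF assms(1)] by blast
  fix e j assume E: "elem_div_vals p n (p ^ n) (wedderburn_mat p n) e" and j: "j < p ^ n"
  have "e j = ev p j" by (rule unique_vals[OF assms A_carrier E existence[OF assms(1)] j])
  then show "int (e j) = (\<Sum>k\<le>n. (int (digit p j k) - int (digit p j (Suc k))) * int (k + 1) * int p ^ k)"
    using Fsum_ev[OF assms(1) j] unfolding Fsum_def by simp
qed

end
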